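(* Let $\alpha>0$ and $0<\beta<\frac14$. Consider the model $Y_i=f(x_i)+V^{1/2}(x_i)\xi_i$, $i=0,\dots,n$, $x_i=i/n$, with $\xi_0,\dots,\xi_n$ i.i.d. with distribution $P_\xi\in\Xi$. For every $\eta\in(0,1)$ there exists $c_\eta>0$ not depending on $n$ such that for all $0<c<c_\eta$ and all $n$ sufficiently large depending only on $\eta$, $$\inf_\varphi\left\{\sup_{f\in\mathcal{H}_\alpha,\,V\in\mathcal{D}_0,\,P_\xi\in\Xi}P_{f,V,P_\xi}\{\varphi=1\}+\sup_{f\in\mathcal{H}_\alpha,\,V\in\mathcal{D}_{1,\beta}(cn^{-\beta}),\,P_\xi\in\Xi}P_{f,V,P_\xi}\{\varphi=0\}\right\}\ge1-\eta,$$ where the infimum is over all tests $\varphi$ (measurable functions of $(Y_0,\dots,Y_n)$ into $\{0,1\}$).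
   Context: $\mathcal{H}_\alpha=\mathcal{H}_\alpha(M)$: functions $g:[0,1]\to\mathbb{R}$ with $|g^{(\lfloor\alpha\rfloor)}(x)-g^{(\lfloor\alpha\rfloor)}(y)|\le M|x-y|^{\alpha-\lfloor\alpha\rfloor}$ for all $x,y$ and $\|g^{(k)}\|_\infty\le M$ for $k=0,\dots,\lfloor\alpha\rfloor$; $M$ is a fixed sufficiently large constant. $\mathcal{D}_0=\{V:[0,1]\to[0,\infty):V(x_i)=\sigma^2\ \forall i\text{ for some }0\le\sigma^2\le M\}$; $\mathcal{D}_{1,\beta}(\varepsilon)=\{V\in\mathcal{H}_\beta:V\ge0,\ \sqrt{\frac1{n+1}\sum_{i=0}^n(V(x_i)-\bar V_n)^2}\ge\varepsilon\}$, $\bar V_n=\frac1{n+1}\sum_{i=0}^nV(x_i)$. $\Xi$ is the set of probability distributions $P_\xi$ with $E\xi=0$, $E\xi^2=1$, $E\xi^4\le C_\xi$ for $\xi\sim P_\xi$, $C_\xi$ a large universal constant. $P_{f,V,P_\xi}$ is the law of the data. *)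

theory Defs
  imports "HOL-Probability.Probability"
begin

definition design :: "nat \<Rightarrow> nat \<Rightarrow> real" where
  "design n i = real i / real n"

definition hoelder :: "real \<Rightarrow> real \<Rightarrow> (real \<Rightarrow> real) \<Rightarrow> bool" where
  "hoelder \<alpha> M g \<longleftrightarrow>
     (\<exists>D :: nat \<Rightarrow> real \<Rightarrow> real.
        (\<forall>x\<in>{0..1}. D 0 x = g x) \<and>
        (\<forall>k<nat \<lfloor>\<alpha>\<rfloor>. \<forall>x\<in>{0..1}.
            (D k has_real_derivative D (Suc k) x) (at x within {0..1})) \<and>
        (\<forall>k\<le>nat \<lfloor>\<alpha>\<rfloor>. \<forall>x\<in>{0..1}. \<bar>D k x\<bar> \<le> M) \<and>
        (\<forall>x\<in>{0..1}. \<forall>y\<in>{0..1}.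
            \<bar>D (nat \<lfloor>\<alpha>\<rfloor>) x - D (nat \<lfloor>\<alpha>\<rfloor>) y\<bar> \<le> M * \<bar>x - y\<bar> powr (\<alpha> - of_int \<lfloor>\<alpha>\<rfloor>)))"

definition D0 :: "real \<Rightarrow> nat \<Rightarrow> (real \<Rightarrow> real) set" where
  "D0 M n = {V. (\<forall>x\<in>{0..1}. V x \<ge> 0) \<and>
                (\<exists>\<sigma>2. 0 \<le> \<sigma>2 \<and> \<sigma>2 \<le> M \<and> (\<forall>i\<le>n. V (design n i) = \<sigma>2))}"

definition Vbar :: "nat \<Rightarrow> (real \<Rightarrow> real) \<Rightarrow> real" where
  "Vbar n V = (\<Sum>i\<le>n. V (design n i)) / real (n + 1)"

definition D1 :: "real \<Rightarrow> real \<Rightarrow> nat \<Rightarrow> real \<Rightarrow> (real \<Rightarrow> real) set" where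
  "D1 M \<beta> n \<epsilon> = {V. hoelder \<beta> M V \<and> (\<forall>x\<in>{0..1}. V x \<ge> 0) \<and>
      sqrt ((\<Sum>i\<le>n. (V (design n i) - Vbar n V)\<^sup>2) / real (n + 1)) \<ge> \<epsilon>}"

definition Xi :: "real \<Rightarrow> real measure set" where
  "Xi C\<xi> = {P. prob_space P \<and> sets P = sets borel \<and>
      integrable P (\<lambda>z. z) \<and> integrable P (\<lambda>z. z\<^sup>2) \<and> integrable P (\<lambda>z. z ^ 4) \<and>
      (\<integral>z. z \<partial>P) = 0 \<and> (\<integral>z. z\<^sup>2 \<partial>P) = 1 \<and> (\<integral>z. z ^ 4 \<partial>P) \<le> C\<xi>}"

definition data_law :: "nat \<Rightarrow> (real \<Rightarrow> real) \<Rightarrow> (real \<Rightarrow> real) \<Rightarrow> real measure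
                        \<Rightarrow> (nat \<Rightarrow> real) measure" where
  "data_law n f V P = (\<Pi>\<^sub>M i\<in>{..n}. distr P borel
       (\<lambda>z. f (design n i) + sqrt (V (design n i)) * z))"

text \<open>Tests: measurable functions of (Y_0,...,Y_n) into {0,1} (True = 1).\<close>
definition tests :: "nat \<Rightarrow> ((nat \<Rightarrow> real) \<Rightarrow> bool) set" where
  "tests n = measurable (\<Pi>\<^sub>M i\<in>{..n}. (borel :: real measure)) (count_space UNIV)"

end

theory Submission imports Defs begin

lemma data_law_pmf:
  fixes r :: "real pmf"
  shows "data_law n f V (distr (measure_pmf r) borel (\<lambda>x. x)) =
     distr (measure_pmf (Pi_pmf {..n} undefined (\<lambda>i. map_pmf (\<lambda>z. f (design n i) + sqrt (V (design n i)) * z) r)))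
       (PiM {..n} (\<lambda>_. borel)) (\<lambda>x. restrict x {..n})"
proof -
  define g where "g = (\<lambda>i z. f (design n i) + sqrt (V (design n i)) * z)"
  define M where "M = (\<lambda>i. distr (measure_pmf r) borel (g i))"
  have gm[measurable]: "g i \<in> borel_measurable borel" for i unfolding g_def by measurable
  have 1: "data_law n f V (distr (measure_pmf r) borel (\<lambda>x. x)) = PiM {..n} M"
    unfolding data_law_def M_def
    by (intro PiM_cong refl) (simp add: distr_distr comp_def g_def)
  interpret product_prob_space M
    unfolding M_def by (intro product_prob_spaceI prob_space.prob_space_distr measure_pmf.prob_space_axioms) simp
  have 2: "PiM {..n} M = distr (measure_pmf (Pi_pmf {..n} undefined (\<lambda>i. map_pmf (g i) r)))
       (PiM {..n} (\<lambda>_. borel)) (\<lambda>x. restrict x {..n})"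
  proof (rule PiM_eqI[symmetric])
    show "sets (distr (measure_pmf (Pi_pmf {..n} undefined (\<lambda>i. map_pmf (g i) r)))
       (PiM {..n} (\<lambda>_. borel)) (\<lambda>x. restrict x {..n})) = sets (PiM {..n} M)"
      by (simp add: M_def cong: sets_PiM_cong)
  next
    fix A assume A: "\<And>i. i \<in> {..n} \<Longrightarrow> A i \<in> sets (M i)"
    have Ab: "A i \<in> sets borel" if "i \<in> {..n}" for i using A[OF that] by (simp add: M_def)
    have mr: "(\<lambda>x. restrict x {..n}) \<in> measurable (measure_pmf (Pi_pmf {..n} undefined (\<lambda>i. map_pmf (g i) r))) (PiM {..n} (\<lambda>_. borel))"
      by (simp add: space_PiM)
    have "Pi\<^sub>E {..n} A \<in> sets (PiM {..n} (\<lambda>_. borel))"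
      using Ab by (intro sets_PiM_I_finite) auto
    hence "emeasure (distr (measure_pmf (Pi_pmf {..n} undefined (\<lambda>i. map_pmf (g i) r))) (PiM {..n} (\<lambda>_. borel)) (\<lambda>x. restrict x {..n})) (Pi\<^sub>E {..n} A)
        = emeasure (measure_pmf (Pi_pmf {..n} undefined (\<lambda>i. map_pmf (g i) r))) ((\<lambda>x. restrict x {..n}) -` Pi\<^sub>E {..n} A)"
      using mr by (subst emeasure_distr) auto
    also have "\<dots> = emeasure (measure_pmf (Pi_pmf {..n} undefined (\<lambda>i. map_pmf (g i) r))) (PiE_dflt {..n} undefined A)"
      by (intro emeasure_eq_AE AE_pmfI) (auto simp: PiE_dflt_def set_Pi_pmf)
    also have "\<dots> = (\<Prod>i\<in>{..n}. emeasure (measure_pmf (map_pmf (g i) r)) (A i))"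
      by (simp add: measure_pmf.emeasure_eq_measure measure_Pi_pmf_PiE_dflt prod_ennreal)
    also have "\<dots> = (\<Prod>i\<in>{..n}. emeasure (M i) (A i))"
      using Ab by (intro prod.cong refl) (simp add: M_def emeasure_distr emeasure_map_pmf)
    finally show "emeasure (distr (measure_pmf (Pi_pmf {..n} undefined (\<lambda>i. map_pmf (g i) r))) (PiM {..n} (\<lambda>_. borel)) (\<lambda>x. restrict x {..n})) (Pi\<^sub>E {..n} A) = (\<Prod>i\<in>{..n}. emeasure (M i) (A i))" .
  qed simp
  show ?thesis using 1 2 by (simp add: g_def)
qed


definition rad :: "real pmf" where "rad = pmf_of_set {-1, 1}"
definition kf :: "real \<Rightarrow> bool \<Rightarrow> real \<Rightarrow> real" where
  "kf h b z = sqrt (1 + (if b then h else -h)) * z"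
definition q0 :: "real \<Rightarrow> real pmf" where
  "q0 h = bind_pmf (bernoulli_pmf (1/2)) (\<lambda>b. map_pmf (kf h b) rad)"

lemma set_rad: "set_pmf rad = {-1, 1}" unfolding rad_def by (subst set_pmf_of_set) auto

lemma fin_q0: "finite (set_pmf (q0 h))"
  unfolding q0_def by (simp add: set_rad)

lemma rad_moments:
  "measure_pmf.expectation rad (\<lambda>z. z) = 0"
  "measure_pmf.expectation rad (\<lambda>z. z\<^sup>2) = 1"
  "measure_pmf.expectation rad (\<lambda>z. z ^ 4) = 1"
  unfolding rad_def by (subst integral_pmf_of_set; simp)+

lemma q0_moments:
  assumes "0 \<le> h" "h \<le> 1"
  shows "measure_pmf.expectation (q0 h) (\<lambda>z. z) = 0"
    "measure_pmf.expectation (q0 h) (\<lambda>z. z\<^sup>2) = 1"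
    "measure_pmf.expectation (q0 h) (\<lambda>z. z ^ 4) = 1 + h\<^sup>2"
proof -
  have e: "measure_pmf.expectation (q0 h) g = (\<Sum>b\<in>UNIV. measure_pmf.expectation rad (\<lambda>z. g (kf h b z)) / 2)" for g :: "real \<Rightarrow> real"
    unfolding q0_def bernoulli_pmf_half_conv_pmf_of_set
    by (subst pmf_expectation_bind_pmf_of_set) (auto simp: set_rad)
  have s1: "sqrt (1 + h) ^ 2 = 1 + h" "sqrt (1 - h) ^ 2 = 1 - h" using assms by simp_all
  have s2: "sqrt (1 + h) ^ 4 = (1 + h)^2" "sqrt (1 - h) ^ 4 = (1 - h)^2" 
    using s1 by (metis power_mult numeral_Bit0 mult_2_right numeral_One power2_eq_square)+
  show "measure_pmf.expectation (q0 h) (\<lambda>z. z) = 0"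
    by (simp add: e UNIV_bool kf_def rad_moments)
  show "measure_pmf.expectation (q0 h) (\<lambda>z. z\<^sup>2) = 1"
    by (simp add: e UNIV_bool kf_def rad_moments power_mult_distrib s1, simp add: field_simps)
  show "measure_pmf.expectation (q0 h) (\<lambda>z. z ^ 4) = 1 + h\<^sup>2"
    by (simp add: e UNIV_bool kf_def rad_moments power_mult_distrib s2 power2_eq_square algebra_simps, simp add: field_simps)
qed

lemma Xi_pmf:
  assumes "finite (set_pmf r)" "measure_pmf.expectation r (\<lambda>z. z) = 0"
    "measure_pmf.expectation r (\<lambda>z. z\<^sup>2) = 1" "measure_pmf.expectation r (\<lambda>z. z ^ 4) \<le> C"
  shows "distr (measure_pmf r) borel (\<lambda>x. x) \<in> Xi C"
  unfolding Xi_def using assms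
  by (auto simp: prob_space.prob_space_distr measure_pmf.prob_space_axioms integrable_distr_eq
      integral_distr integrable_measure_pmf_finite)

lemma powr_subadd:
  fixes a b \<beta> :: real
  assumes "0 \<le> a" "0 \<le> b" "0 < \<beta>" "\<beta> \<le> 1"
  shows "(a + b) powr \<beta> \<le> a powr \<beta> + b powr \<beta>"
proof (cases "a + b = 0")
  case True then show ?thesis using assms by simp
next
  case False
  hence ab: "a + b > 0" using assms by simp
  have le: "x \<le> x powr \<beta>" if "0 \<le> x" "x \<le> 1" for x :: real
  proof (cases "x = 0")
    case False
    then have "x powr 1 \<le> x powr \<beta>" using that assms by (intro powr_mono') auto
    then show ?thesis using that by simp
  qed simp
  have "a / (a+b) \<le> (a/(a+b)) powr \<beta>" "b / (a+b) \<le> (b/(a+b)) powr \<beta>"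
    using assms ab by (intro le; simp add: divide_simps)+
  moreover have "a/(a+b) + b/(a+b) = 1" using ab by (simp add: add_divide_distrib[symmetric])
  ultimately have "1 \<le> (a/(a+b)) powr \<beta> + (b/(a+b)) powr \<beta>"
    by linarith
  also have "\<dots> = (a powr \<beta> + b powr \<beta>) / (a+b) powr \<beta>"
    using assms ab by (simp add: powr_divide add_divide_distrib)
  finally show ?thesis using ab by (simp add: divide_simps)
qed

lemma Min_shift:
  fixes F G :: "'a \<Rightarrow> real"
  assumes "finite J" "J \<noteq> {}" "\<And>j. j \<in> J \<Longrightarrow> F j \<le> G j + d"
  shows "Min (F ` J) \<le> Min (G ` J) + d"
proof -
  have "Min (G ` J) \<in> G ` J" using Min_in[of "G ` J"] assms by auto
  then obtain j where j: "j \<in> J" "Min (G ` J) = G j" by auto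
  have "Min (F ` J) \<le> F j" using assms j by auto
  thus ?thesis using assms(3)[OF j(1)] j by simp
qed

definition Vmc :: "nat \<Rightarrow> real \<Rightarrow> (nat \<Rightarrow> real) \<Rightarrow> real \<Rightarrow> real" where
  "Vmc n \<beta> v x = Min ((\<lambda>j. v j + \<bar>x - design n j\<bar> powr \<beta>) ` {..n})"

lemma Vmc_hoelder:
  assumes "0 < \<beta>" "\<beta> \<le> 1"
  shows "\<bar>Vmc n \<beta> v x - Vmc n \<beta> v y\<bar> \<le> \<bar>x - y\<bar> powr \<beta>"
proof -
  have key: "Vmc n \<beta> v x \<le> Vmc n \<beta> v y + \<bar>x - y\<bar> powr \<beta>" for x y
    unfolding Vmc_def
  proof (rule Min_shift)
    fix j
    have "\<bar>x - design n j\<bar> powr \<beta> \<le> (\<bar>x - y\<bar> + \<bar>y - design n j\<bar>) powr \<beta>"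
      using assms by (intro powr_mono2) auto
    also have "\<dots> \<le> \<bar>x - y\<bar> powr \<beta> + \<bar>y - design n j\<bar> powr \<beta>"
      using assms by (intro powr_subadd) auto
    finally show "v j + \<bar>x - design n j\<bar> powr \<beta> \<le> v j + \<bar>y - design n j\<bar> powr \<beta> + \<bar>x - y\<bar> powr \<beta>"
      by simp
  qed auto
  show ?thesis using key[of x y] key[of y x] by (simp add: abs_minus_commute)
qed

lemma event_prob:
  assumes "\<phi> \<in> tests n"
  shows "measure (data_law n f V (distr (measure_pmf r) borel (\<lambda>x. x)))
           {y \<in> space (data_law n f V (distr (measure_pmf r) borel (\<lambda>x. x))). Q (\<phi> y)} =
         measure_pmf.prob (Pi_pmf {..n} undefined (\<lambda>i. map_pmf (\<lambda>z. f (design n i) + sqrt (V (design n i)) * z) r))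
           {x. Q (\<phi> (restrict x {..n}))}"
proof -
  have phm: "\<phi> \<in> measurable (PiM {..n} (\<lambda>_. borel)) (count_space UNIV)"
    using assms unfolding tests_def by simp
  have S: "{y \<in> space (PiM {..n} (\<lambda>_. borel :: real measure)). Q (\<phi> y)} \<in> sets (PiM {..n} (\<lambda>_. borel))"
  proof -
    have "{y \<in> space (PiM {..n} (\<lambda>_. borel :: real measure)). Q (\<phi> y)} = \<phi> -` {b. Q b} \<inter> space (PiM {..n} (\<lambda>_. borel))"
      by auto
    also have "\<dots> \<in> sets (PiM {..n} (\<lambda>_. borel))"
      using phm by (intro measurable_sets) auto
    finally show ?thesis .
  qed
  have mr: "(\<lambda>x. restrict x {..n}) \<in> measurable (measure_pmf (Pi_pmf {..n} undefined (\<lambda>i. map_pmf (\<lambda>z. f (design n i) + sqrt (V (design n i)) * z) r))) (PiM {..n} (\<lambda>_. borel :: real measure))"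
    by (simp add: space_PiM)
  show ?thesis
    unfolding data_law_pmf
    using S mr by (subst measure_distr) (auto simp: space_PiM intro!: arg_cong2[where f=measure])
qed

lemma data_law_prob:
  assumes "prob_space P" "sets P = sets borel"
  shows "prob_space (data_law n f V P)"
  unfolding data_law_def
proof (intro prob_space_PiM prob_space.prob_space_distr assms(1))
  fix i
  have "(\<lambda>z. f (design n i) + sqrt (V (design n i)) * z) \<in> borel_measurable borel" by measurable
  moreover have "borel_measurable P = borel_measurable borel"
    by (rule measurable_cong_sets[OF assms(2) refl])
  ultimately show "(\<lambda>z. f (design n i) + sqrt (V (design n i)) * z) \<in> borel_measurable P"
    by metis
qed

lemma bdd_SUP:
  assumes "\<And>f V P. (f, V, P) \<in> S \<Longrightarrow> P \<in> Xi C"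
  shows "bdd_above ((\<lambda>(f, V, P). measure (data_law n f V P) (X f V P)) ` S)"
proof (rule bdd_aboveI[of _ 1])
  fix x assume "x \<in> (\<lambda>(f, V, P). measure (data_law n f V P) (X f V P)) ` S"
  then obtain f V P where x: "x = measure (data_law n f V P) (X f V P)" "P \<in> Xi C" using assms by auto
  then have "prob_space (data_law n f V P)" by (intro data_law_prob) (auto simp: Xi_def)
  then show "x \<le> 1" using x prob_space.prob_le_1 by metis
qed

lemma null_mix:
  "Pi_pmf {..n::nat} undefined (\<lambda>_. q0 h) = bind_pmf (Pi_pmf {..n} False (\<lambda>_. bernoulli_pmf (1/2)))
      (\<lambda>\<epsilon>. Pi_pmf {..n} undefined (\<lambda>i. map_pmf (kf h (\<epsilon> i)) rad))"
  unfolding q0_def by (rule Pi_pmf_bind) simp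

lemma prob_bind_sum:
  assumes "finite (set_pmf p)" "\<And>x. finite (set_pmf (g x))"
  shows "measure_pmf.prob (bind_pmf p g) E = (\<Sum>a\<in>set_pmf p. pmf p a * measure_pmf.prob (g a) E)"
proof -
  have "measure_pmf.prob (bind_pmf p g) E = measure_pmf.expectation (bind_pmf p g) (indicator E)"
    by simp
  also have "\<dots> = (\<Sum>a\<in>set_pmf p. pmf p a * measure_pmf.expectation (g a) (indicator E))"
    using assms by (subst pmf_expectation_bind[where A="set_pmf p"]) auto
  finally show ?thesis by simp
qed

lemma coins_bad:
  "measure_pmf.prob (Pi_pmf {..n} False (\<lambda>_. bernoulli_pmf (1/2)))
     {\<epsilon>. 1/4 \<le> \<bar>(\<Sum>i\<le>n. if \<epsilon> i then 1 else 0) / real (Suc n) - 1/2\<bar>} \<le> 2 * exp (- real (Suc n) / 8)"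
proof -
  interpret binomial_distribution "Suc n" "1/2" by unfold_locales simp
  have conv: "measure_pmf.prob (binomial_pmf (Suc n) (1/2)) {x. (\<lambda>r. 1/4 \<le> \<bar>r / real (Suc n) - 1/2\<bar>) (real x)} =
        measure_pmf.prob (Pi_pmf {..<Suc n} False (\<lambda>_. bernoulli_pmf (1/2)))
          {x. (\<lambda>r. 1/4 \<le> \<bar>r / real (Suc n) - 1/2\<bar>) (\<Sum>i<Suc n. if x i then 1 else 0)}"
    by (rule prob_binomial_pmf_conv_coins) simp
  have conv': "measure_pmf.prob (Pi_pmf {..n} False (\<lambda>_. bernoulli_pmf (1/2)))
     {\<epsilon>. 1/4 \<le> \<bar>(\<Sum>i\<le>n. if \<epsilon> i then 1 else 0) / real (Suc n) - 1/2\<bar>} =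
     measure_pmf.prob (binomial_pmf (Suc n) (1/2)) {x. 1/4 \<le> \<bar>real x / real (Suc n) - 1/2\<bar>}"
    using conv by (simp only: lessThan_Suc_atMost)
  have e: "real_of_int (- 2 * int (Suc n)) * (1/4::real)\<^sup>2 = - real (Suc n) / 8"
    by (simp add: power2_eq_square)
  have b: "measure_pmf.prob (binomial_pmf (Suc n) (1/2)) {x. 1/4 \<le> \<bar>real x / real (Suc n) - 1/2\<bar>}
     \<le> 2 * exp (- real (Suc n) / 8)"
    using prob_abs_ge'[of "1/4"] unfolding e by simp
  show ?thesis using conv' b by simp
qed

lemma rms:
  fixes w :: "nat \<Rightarrow> real" and \<epsilon> :: "nat \<Rightarrow> bool"
  assumes w: "\<And>i. i \<le> n \<Longrightarrow> w i = 1 + (if \<epsilon> i then 2*t else -(2*t))" and t: "t \<ge> 0"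
    and good: "\<bar>(\<Sum>i\<le>n. if \<epsilon> i then 1 else 0) / real (Suc n) - 1/2\<bar> < 1/4"
  shows "t \<le> sqrt ((\<Sum>i\<le>n. (w i - (\<Sum>j\<le>n. w j) / real (n + 1))\<^sup>2) / real (n + 1))"
proof -
  define s where "s i = (if \<epsilon> i then 1 else -1 :: real)" for i
  define K where "K = (\<Sum>i\<le>n. if \<epsilon> i then 1 else 0 :: real)"
  define N where "N = real (n + 1)"
  have N: "N > 0" unfolding N_def by simp
  have s2: "s i ^ 2 = 1" for i by (simp add: s_def)
  have sK: "(\<Sum>i\<le>n. s i) = 2 * K - N"
  proof -
    have "(\<Sum>i\<le>n. s i) = (\<Sum>i\<le>n. 2 * (if \<epsilon> i then 1 else 0) - 1)"
      by (intro sum.cong) (auto simp: s_def)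
    also have "\<dots> = 2 * K - N"
      by (simp add: sum_subtractf sum_distrib_left[symmetric] K_def N_def)
    finally show ?thesis .
  qed
  define m where "m = (2 * K - N) / N"
  have m: "\<bar>m\<bar> < 1/2"
  proof -
    have mm: "m = 2 * (K / N - 1/2)" using N by (simp add: m_def field_simps)
    have g': "\<bar>K / N - 1/2\<bar> < 1/4" using good by (simp add: K_def N_def)
    have "\<bar>m\<bar> = 2 * \<bar>K / N - 1/2\<bar>" unfolding mm by (simp only: abs_mult)
    thus ?thesis using g' by simp
  qed
  have wi: "w i = 1 + 2 * t * s i" if "i \<le> n" for i using w[OF that] by (simp add: s_def)
  have wsum: "(\<Sum>j\<le>n. w j) / real (n + 1) = 1 + 2 * t * m"
  proof -
    have "(\<Sum>j\<le>n. w j) = (\<Sum>j\<le>n. 1 + 2 * t * s j)" by (intro sum.cong) (auto simp: wi)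
    also have "\<dots> = N + 2 * t * (2 * K - N)"
      by (simp add: sum.distrib sum_distrib_left[symmetric] sK N_def)
    finally have sw: "(\<Sum>j\<le>n. w j) = N + 2 * t * (2 * K - N)" .
    have "(\<Sum>j\<le>n. w j) / real (n + 1) = (N + 2 * t * (2 * K - N)) / N" using sw by (simp add: N_def)
    also have "\<dots> = 1 + 2 * t * m" using N by (simp add: m_def field_simps)
    finally show ?thesis .
  qed
  have "(\<Sum>i\<le>n. (w i - (\<Sum>j\<le>n. w j) / real (n + 1))\<^sup>2) = (\<Sum>i\<le>n. (w i - (1 + 2 * t * m))\<^sup>2)"
    by (simp only: wsum)
  also have "\<dots> = (\<Sum>i\<le>n. 4 * t\<^sup>2 * (s i ^ 2 - 2 * m * s i + m\<^sup>2))"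
    by (intro sum.cong) (auto simp: wi power2_eq_square algebra_simps)
  also have "\<dots> = 4 * t\<^sup>2 * (N - 2 * m * (2 * K - N) + N * m\<^sup>2)"
    by (simp add: s2 sum.distrib sum_subtractf sum_distrib_left[symmetric] sK N_def)
  also have "\<dots> = 4 * t\<^sup>2 * N * (1 - m\<^sup>2)"
    using N by (simp add: m_def power2_eq_square field_simps)
  finally have eq0: "(\<Sum>i\<le>n. (w i - (\<Sum>j\<le>n. w j) / real (n + 1))\<^sup>2) = 4 * t\<^sup>2 * N * (1 - m\<^sup>2)" .
  have eq: "(\<Sum>i\<le>n. (w i - (\<Sum>j\<le>n. w j) / real (n + 1))\<^sup>2) / real (n + 1) = 4 * t\<^sup>2 * (1 - m\<^sup>2)"
  proof -
    have "(\<Sum>i\<le>n. (w i - (\<Sum>j\<le>n. w j) / real (n + 1))\<^sup>2) / real (n + 1) = 4 * t\<^sup>2 * N * (1 - m\<^sup>2) / N"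
      by (simp only: eq0 N_def)
    also have "\<dots> = 4 * t\<^sup>2 * (1 - m\<^sup>2)" using N by simp
    finally show ?thesis .
  qed
  have "m\<^sup>2 \<le> 1/4"
  proof -
    have "m\<^sup>2 = \<bar>m\<bar>\<^sup>2" by simp
    also have "\<dots> \<le> (1/2)\<^sup>2" using m by (intro power_mono) auto
    finally show ?thesis by (simp add: power2_eq_square)
  qed
  hence "0 \<le> t\<^sup>2 * (3 - 4 * m\<^sup>2)" by (intro mult_nonneg_nonneg) auto
  moreover have "4 * t\<^sup>2 * (1 - m\<^sup>2) - t\<^sup>2 = t\<^sup>2 * (3 - 4 * m\<^sup>2)" by (simp add: algebra_simps)
  ultimately have "t\<^sup>2 \<le> 4 * t\<^sup>2 * (1 - m\<^sup>2)" by linarith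
  thus ?thesis unfolding eq by (intro real_le_rsqrt)
qed

lemma Vmc_grid:
  assumes n: "n \<ge> 1" and \<beta>: "\<beta> > 0" and i: "i \<le> n"
    and v: "\<And>j k. j \<le> n \<Longrightarrow> k \<le> n \<Longrightarrow> v k - v j \<le> real n powr (-\<beta>)"
  shows "Vmc n \<beta> v (design n i) = v i"
  unfolding Vmc_def
proof (rule Min_eqI)
  show "v i \<in> (\<lambda>j. v j + \<bar>design n i - design n j\<bar> powr \<beta>) ` {..n}"
    using i by (intro image_eqI[of _ _ i]) auto
next
  fix y assume "y \<in> (\<lambda>j. v j + \<bar>design n i - design n j\<bar> powr \<beta>) ` {..n}"
  then obtain j where j: "j \<le> n" "y = v j + \<bar>design n i - design n j\<bar> powr \<beta>" by auto
  show "v i \<le> y"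
  proof (cases "j = i")
    case True thus ?thesis using j by simp
  next
    case False
    have "\<bar>real i - real j\<bar> \<ge> 1" using False by linarith
    hence "1 / real n \<le> \<bar>design n i - design n j\<bar>"
      using n by (simp add: design_def diff_divide_distrib[symmetric] abs_div divide_right_mono)
    hence "(1 / real n) powr \<beta> \<le> \<bar>design n i - design n j\<bar> powr \<beta>"
      using n \<beta> by (intro powr_mono2) auto
    moreover have "(1 / real n) powr \<beta> = real n powr (-\<beta>)"
      using n by (simp add: powr_divide powr_minus_divide)
    ultimately show ?thesis using v[OF j(1) i] j by simp
  qed
qed simp

lemma Vmc_bounds:
  assumes \<beta>: "\<beta> > 0" and v: "\<And>j. j \<le> n \<Longrightarrow> 0 \<le> v j \<and> v j \<le> B" and x: "x \<in> {0..1}"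
  shows "0 \<le> Vmc n \<beta> v x" "Vmc n \<beta> v x \<le> B + 1"
proof -
  show "0 \<le> Vmc n \<beta> v x" unfolding Vmc_def
    using v by (subst Min_ge_iff) auto
  have "Vmc n \<beta> v x \<le> v 0 + \<bar>x - design n 0\<bar> powr \<beta>" unfolding Vmc_def
    by (intro Min_le) auto
  also have "\<bar>x - design n 0\<bar> powr \<beta> \<le> 1"
    using x \<beta> by (auto simp: design_def intro!: powr_le1)
  finally show "Vmc n \<beta> v x \<le> B + 1" using v[of 0] by simp
qed

lemma hoelder_Vmc:
  assumes \<beta>: "0 < \<beta>" "\<beta> < 1" and M: "1 \<le> M" and bd: "\<And>x. x \<in> {0..1} \<Longrightarrow> \<bar>Vmc n \<beta> v x\<bar> \<le> M"
  shows "hoelder \<beta> M (Vmc n \<beta> v)"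
proof -
  have fl: "\<lfloor>\<beta>\<rfloor> = 0" using \<beta> by (simp add: floor_eq_iff)
  show ?thesis unfolding hoelder_def fl
  proof (intro exI[of _ "\<lambda>k. Vmc n \<beta> v"] conjI ballI allI impI)
    fix x y :: real
    have "\<bar>Vmc n \<beta> v x - Vmc n \<beta> v y\<bar> \<le> \<bar>x - y\<bar> powr \<beta>" using \<beta> by (intro Vmc_hoelder) auto
    also have "\<dots> = 1 * \<bar>x - y\<bar> powr \<beta>" by simp
    also have "\<dots> \<le> M * \<bar>x - y\<bar> powr \<beta>" by (rule mult_right_mono) (use M in auto)
    finally show "\<bar>Vmc n \<beta> v x - Vmc n \<beta> v y\<bar> \<le> M * \<bar>x - y\<bar> powr (\<beta> - real_of_int 0)" by simp
  qed (use bd in auto)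
qed

lemma hoelder_zero:
  assumes "0 \<le> M"
  shows "hoelder \<alpha> M (\<lambda>_. 0)"
  unfolding hoelder_def
  by (intro exI[of _ "\<lambda>k x. 0"]) (auto simp: assms)

lemma main_bound:
  fixes M C\<xi> \<alpha> \<beta> \<eta> c :: real and n :: nat
  assumes M: "M \<ge> 3" and C: "C\<xi> \<ge> 2" and \<beta>0: "0 < \<beta>" and \<beta>1: "\<beta> < 1/4"
    and \<eta>0: "0 < \<eta>" and \<eta>1: "\<eta> < 1" and c0: "0 < c" and c1: "c < 1/4" and nN: "n \<ge> nat \<lceil>16/\<eta>\<rceil> + 1"
    and \<phi>: "\<phi> \<in> tests n"
  shows "1 - \<eta> \<le> (SUP (f, V, P)\<in>{(f, V, P). hoelder \<alpha> M f \<and> V \<in> D0 M n \<and> P \<in> Xi C\<xi>}.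
               measure (data_law n f V P) {y \<in> space (data_law n f V P). \<phi> y})
         + (SUP (f, V, P)\<in>{(f, V, P). hoelder \<alpha> M f \<and> V \<in> D1 M \<beta> n (c * real n powr (- \<beta>)) \<and> P \<in> Xi C\<xi>}.
               measure (data_law n f V P) {y \<in> space (data_law n f V P). \<not> \<phi> y})"
    (is "_ \<le> ?SN + ?SA")
proof -
  define I where "I = {..n}"
  have n1: "n \<ge> 1" using nN by simp
  have n16: "16 / \<eta> \<le> real n"
    using nN real_nat_ceiling_ge[of "16/\<eta>"] by linarith
  define t where "t = c * real n powr (- \<beta>)"
  have np: "0 < real n powr (- \<beta>)" using n1 by simp
  have np1: "real n powr (- \<beta>) \<le> 1"
  proof -
    have "1 \<le> real n powr \<beta>" using n1 \<beta>0 by (intro ge_one_powr_ge_zero) auto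
    thus ?thesis by (auto simp: powr_minus_divide divide_le_eq_1)
  qed
  have t0: "0 < t" unfolding t_def using c0 np by simp
  have t4: "4 * t \<le> real n powr (- \<beta>)" unfolding t_def using c1 np by simp
  have tc: "t \<le> c" unfolding t_def using c0 np1 by (simp add: mult_left_le)
  define h where "h = 2 * t"
  have h0: "0 \<le> h" "h \<le> 1" using t0 tc c1 by (auto simp: h_def)
  define coins where "coins = Pi_pmf I False (\<lambda>_. bernoulli_pmf (1/2))"
  define Alt where "Alt \<epsilon> = Pi_pmf I undefined (\<lambda>i. map_pmf (kf h (\<epsilon> i)) rad)" for \<epsilon> :: "nat \<Rightarrow> bool"
  define vg where "vg \<epsilon> j = 1 + (if \<epsilon> j then h else -h)" for \<epsilon> :: "nat \<Rightarrow> bool" and j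
  define VV where "VV \<epsilon> = Vmc n \<beta> (vg \<epsilon>)" for \<epsilon>
  define G where "G = {\<epsilon>. \<bar>(\<Sum>i\<le>n. if \<epsilon> i then 1 else 0) / real (Suc n) - 1/2\<bar> < (1/4::real)}"
  define P0 where "P0 = distr (measure_pmf (q0 h)) borel (\<lambda>x. x)"
  define P1 where "P1 = distr (measure_pmf rad) borel (\<lambda>x. x)"
  define Phi where "Phi = {x. \<phi> (restrict x I)}"
  define nPhi where "nPhi = {x. \<not> \<phi> (restrict x I)}"
  define \<Omega> where "\<Omega> = set_pmf coins"
  have fin\<Omega>: "finite \<Omega>" unfolding \<Omega>_def coins_def I_def by (simp add: set_Pi_pmf finite_PiE_dflt)
  have finAlt: "finite (set_pmf (Alt a))" for a
    unfolding Alt_def I_def by (simp add: set_Pi_pmf set_rad finite_PiE_dflt)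

  have P0Xi: "P0 \<in> Xi C\<xi>" unfolding P0_def
  proof (rule Xi_pmf)
    have "h\<^sup>2 \<le> 1" using h0 by (simp add: power_le_one)
    thus "measure_pmf.expectation (q0 h) (\<lambda>z. z ^ 4) \<le> C\<xi>" using q0_moments[OF h0] C by simp
  qed (use fin_q0 q0_moments[OF h0] in auto)
  have P1Xi: "P1 \<in> Xi C\<xi>" unfolding P1_def
    by (rule Xi_pmf) (use rad_moments C in \<open>auto simp: set_rad\<close>)
  have hz: "hoelder \<alpha> M (\<lambda>_. 0)" using M by (intro hoelder_zero) simp
  have V0: "(\<lambda>_. 1) \<in> D0 M n" unfolding D0_def using M by (auto intro!: exI[of _ 1])

  have vgd: "vg a k - vg a j \<le> real n powr (- \<beta>)" for a j k
    using t4 t0 by (auto simp: vg_def h_def)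
  have VVgrid: "VV a (design n i) = vg a i" if "i \<le> n" for a i
    unfolding VV_def using n1 \<beta>0 that vgd by (intro Vmc_grid) auto

  have A0eq: "measure (data_law n (\<lambda>_. 0) (\<lambda>_. 1) P0) {y \<in> space (data_law n (\<lambda>_. 0) (\<lambda>_. 1) P0). \<phi> y}
      = measure_pmf.prob (Pi_pmf I undefined (\<lambda>_. q0 h)) Phi"
    unfolding P0_def Phi_def I_def
    using event_prob[OF \<phi>, where f="\<lambda>_. 0" and V="\<lambda>_. 1" and r="q0 h" and Q="\<lambda>b. b"] by simp
  have A0sum: "measure_pmf.prob (Pi_pmf I undefined (\<lambda>_. q0 h)) Phi = (\<Sum>a\<in>\<Omega>. pmf coins a * measure_pmf.prob (Alt a) Phi)"
    unfolding I_def null_mix \<Omega>_def coins_def Alt_def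
    by (rule prob_bind_sum) (use fin\<Omega> finAlt in \<open>auto simp: \<Omega>_def coins_def Alt_def I_def\<close>)
  have SN: "measure (data_law n (\<lambda>_. 0) (\<lambda>_. 1) P0) {y \<in> space (data_law n (\<lambda>_. 0) (\<lambda>_. 1) P0). \<phi> y} \<le> ?SN"
  proof -
    have mem: "((\<lambda>_. 0), (\<lambda>_. 1), P0) \<in> {(f, V, P). hoelder \<alpha> M f \<and> V \<in> D0 M n \<and> P \<in> Xi C\<xi>}"
      using hz V0 P0Xi by simp
    have bdd: "bdd_above ((\<lambda>(f, V, P). measure (data_law n f V P) {y \<in> space (data_law n f V P). \<phi> y}) `
       {(f, V, P). hoelder \<alpha> M f \<and> V \<in> D0 M n \<and> P \<in> Xi C\<xi>})"
      by (rule bdd_SUP) auto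
    show ?thesis using cSUP_upper[OF mem bdd] by simp
  qed

  have altD1: "VV a \<in> D1 M \<beta> n (c * real n powr (- \<beta>))" if aG: "a \<in> G" for a
  proof -
    have vb: "0 \<le> vg a j \<and> vg a j \<le> 3/2" for j using h0 t0 tc c1 by (auto simp: vg_def h_def)
    have bds: "0 \<le> VV a x" "VV a x \<le> 3/2 + 1" if "x \<in> {0..1}" for x
      unfolding VV_def using Vmc_bounds[OF \<beta>0 vb that] by auto
    have hol: "hoelder \<beta> M (VV a)" unfolding VV_def
    proof (rule hoelder_Vmc)
      fix x :: real assume x: "x \<in> {0..1}"
      have "0 \<le> Vmc n \<beta> (vg a) x" "Vmc n \<beta> (vg a) x \<le> 3/2 + 1" using bds[OF x] unfolding VV_def by auto
      thus "\<bar>Vmc n \<beta> (vg a) x\<bar> \<le> M" using M by (simp only: abs_le_iff) linarith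
    qed (use \<beta>0 \<beta>1 M in auto)
    have "t \<le> sqrt ((\<Sum>i\<le>n. (VV a (design n i) - (\<Sum>j\<le>n. VV a (design n j)) / real (n + 1))\<^sup>2) / real (n + 1))"
      by (rule rms[where \<epsilon>=a]) (use aG t0 in \<open>auto simp: VVgrid vg_def h_def G_def\<close>)
    thus ?thesis unfolding D1_def Vbar_def using hol bds by (auto simp: t_def)
  qed
  have Aalt: "measure (data_law n (\<lambda>_. 0) (VV a) P1) {y \<in> space (data_law n (\<lambda>_. 0) (VV a) P1). \<not> \<phi> y}
      = measure_pmf.prob (Alt a) nPhi" for a
  proof -
    have "measure (data_law n (\<lambda>_. 0) (VV a) P1) {y \<in> space (data_law n (\<lambda>_. 0) (VV a) P1). \<not> \<phi> y}
      = measure_pmf.prob (Pi_pmf {..n} undefined (\<lambda>i. map_pmf (\<lambda>z. 0 + sqrt (VV a (design n i)) * z) rad)) nPhi"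
      unfolding P1_def nPhi_def I_def
      using event_prob[OF \<phi>, where f="\<lambda>_. 0" and V="VV a" and r="rad" and Q="Not"] by simp
    also have "Pi_pmf {..n} undefined (\<lambda>i. map_pmf (\<lambda>z. 0 + sqrt (VV a (design n i)) * z) rad) = Alt a"
      unfolding Alt_def I_def
      by (intro Pi_pmf_cong refl map_pmf_cong) (auto simp: VVgrid vg_def kf_def)
    finally show ?thesis .
  qed
  have SA: "measure_pmf.prob (Alt a) nPhi \<le> ?SA" if "a \<in> G" for a
  proof -
    have mem: "((\<lambda>_. 0), VV a, P1) \<in> {(f, V, P). hoelder \<alpha> M f \<and> V \<in> D1 M \<beta> n (c * real n powr (- \<beta>)) \<and> P \<in> Xi C\<xi>}"
      using hz altD1[OF that] P1Xi by simp
    have bdd: "bdd_above ((\<lambda>(f, V, P). measure (data_law n f V P) {y \<in> space (data_law n f V P). \<not> \<phi> y}) `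
       {(f, V, P). hoelder \<alpha> M f \<and> V \<in> D1 M \<beta> n (c * real n powr (- \<beta>)) \<and> P \<in> Xi C\<xi>})"
      by (rule bdd_SUP) auto
    show ?thesis using cSUP_upper[OF mem bdd] Aalt[of a] by simp
  qed
  have compl: "measure_pmf.prob (Alt a) Phi = 1 - measure_pmf.prob (Alt a) nPhi" for a
  proof -
    have "nPhi = space (measure_pmf (Alt a)) - Phi" by (auto simp: nPhi_def Phi_def)
    thus ?thesis using measure_pmf.prob_compl[of Phi "Alt a"] by simp
  qed

  define PG where "PG = (\<Sum>a\<in>\<Omega> \<inter> G. pmf coins a)"
  have PGeq: "PG = measure_pmf.prob coins G"
  proof -
    have "PG = measure_pmf.prob coins (G \<inter> \<Omega>)"
      unfolding PG_def using fin\<Omega> by (subst measure_measure_pmf_finite) (auto simp: Int_commute)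
    also have "\<dots> = measure_pmf.prob coins G" unfolding \<Omega>_def by (rule measure_Int_set_pmf)
    finally show ?thesis .
  qed
  have PG1: "PG \<le> 1" unfolding PGeq by simp
  have PGeta: "1 - \<eta> \<le> PG"
  proof -
    define Bad where "Bad = {\<epsilon>. 1/4 \<le> \<bar>(\<Sum>i\<le>n. if \<epsilon> i then 1 else 0) / real (Suc n) - (1/2::real)\<bar>}"
    have "G = space (measure_pmf coins) - Bad" by (auto simp: G_def Bad_def)
    hence PGc: "PG = 1 - measure_pmf.prob coins Bad"
      unfolding PGeq using measure_pmf.prob_compl[of Bad coins] by simp
    have b1: "measure_pmf.prob coins Bad \<le> 2 * exp (- real (Suc n) / 8)"
      unfolding coins_def Bad_def I_def by (rule coins_bad)
    define y where "y = real (Suc n) / 8"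
    have y0: "0 < y" by (simp add: y_def)
    have "1 + y \<le> exp y" by (rule exp_ge_add_one_self)
    hence yy: "y \<le> exp y" by linarith
    have e1: "- real (Suc n) / 8 = - y" unfolding y_def by (rule minus_divide_left[symmetric])
    have "exp (- real (Suc n) / 8) = inverse (exp y)" unfolding e1 by (rule exp_minus)
    also have "\<dots> \<le> inverse y" using yy y0 by (rule le_imp_inverse_le)
    also have "inverse y = 8 / real (Suc n)" by (simp add: y_def)
    finally have "exp (- real (Suc n) / 8) \<le> 8 / real (Suc n)" .
    hence "measure_pmf.prob coins Bad \<le> 16 / real (Suc n)" using b1 by simp
    also have "16 / real (Suc n) \<le> \<eta>"
      using n16 \<eta>0 by (simp add: field_simps)
    finally show ?thesis using PGc by simp
  qed

  have sum1: "(\<Sum>a\<in>\<Omega>. pmf coins a * measure_pmf.prob (Alt a) Phi) \<ge> (\<Sum>a\<in>\<Omega> \<inter> G. pmf coins a * measure_pmf.prob (Alt a) Phi)"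
    by (rule sum_mono2) (use fin\<Omega> in auto)
  have sum2: "(\<Sum>a\<in>\<Omega> \<inter> G. pmf coins a * measure_pmf.prob (Alt a) Phi) \<ge> (\<Sum>a\<in>\<Omega> \<inter> G. pmf coins a * (1 - ?SA))"
  proof (rule sum_mono)
    fix a assume "a \<in> \<Omega> \<inter> G"
    hence "1 - ?SA \<le> measure_pmf.prob (Alt a) Phi" using SA[of a] compl[of a] by auto
    thus "pmf coins a * (1 - ?SA) \<le> pmf coins a * measure_pmf.prob (Alt a) Phi"
      by (intro mult_left_mono) auto
  qed
  have sum3: "(\<Sum>a\<in>\<Omega> \<inter> G. pmf coins a * (1 - ?SA)) = PG * (1 - ?SA)"
    unfolding PG_def by (simp add: sum_distrib_right)
  have SA0: "0 \<le> ?SA"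
  proof -
    have "\<Omega> \<inter> G \<noteq> {}"
    proof
      assume "\<Omega> \<inter> G = {}"
      hence "PG = 0" unfolding PG_def by simp
      thus False using PGeta \<eta>1 by linarith
    qed
    then obtain a where "a \<in> G" by auto
    thus ?thesis using SA[of a] measure_nonneg[of "measure_pmf (Alt a)" nPhi] by linarith
  qed
  have "PG * (1 - ?SA) \<le> ?SN"
    using SN A0eq A0sum sum1 sum2 sum3 by linarith
  moreover have "PG \<le> PG * (1 - ?SA) + ?SA"
  proof -
    have "0 \<le> ?SA * (1 - PG)" using SA0 PG1 by simp
    thus ?thesis by (simp add: algebra_simps)
  qed
  ultimately show ?thesis using PGeta by linarith
qed

lemma tests_ne: "tests n \<noteq> {}"
proof -
  have "(\<lambda>_. True) \<in> tests n" unfolding tests_def by (rule measurable_const) simp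
  thus ?thesis by auto
qed

theorem proposition5p4:
  shows "\<exists>M0 C0. \<forall>M\<ge>M0. \<forall>C\<xi>\<ge>C0. \<forall>\<alpha> \<beta> \<eta> :: real.
     \<alpha> > 0 \<longrightarrow> 0 < \<beta> \<longrightarrow> \<beta> < 1/4 \<longrightarrow> 0 < \<eta> \<longrightarrow> \<eta> < 1 \<longrightarrow>
     (\<exists>c\<eta> > 0. \<exists>N::nat. \<forall>c. 0 < c \<longrightarrow> c < c\<eta> \<longrightarrow> (\<forall>n\<ge>N.
        (INF \<phi>\<in>tests n.
           (SUP (f, V, P)\<in>{(f, V, P). hoelder \<alpha> M f \<and> V \<in> D0 M n \<and> P \<in> Xi C\<xi>}.
               measure (data_law n f V P) {y \<in> space (data_law n f V P). \<phi> y})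
         + (SUP (f, V, P)\<in>{(f, V, P). hoelder \<alpha> M f \<and> V \<in> D1 M \<beta> n (c * real n powr (- \<beta>)) \<and> P \<in> Xi C\<xi>}.
               measure (data_law n f V P) {y \<in> space (data_law n f V P). \<not> \<phi> y}))
        \<ge> 1 - \<eta>))"
  apply (rule exI[of _ "3::real"])
  apply (rule exI[of _ "2::real"])
  apply (intro allI impI)
  apply (rule exI[of _ "1/4::real"])
  apply (rule conjI, simp)
  apply (rule_tac x="nat \<lceil>16/\<eta>\<rceil> + 1" in exI)
  apply (intro allI impI)
  apply (rule cINF_greatest[OF tests_ne])
  apply (rule main_bound)
  apply auto
  done

end
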